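(* Let $\overline G$ be a finite graph embedded in an annulus $A$ with annular connectivity $\kappa(\overline G)=1$, and let $G$ be its lift to the universal cover of $A$. Let $v$ be a vertex forming an annular cut set, and let $H$ be the finite graph obtained by splitting $\overline G$ at $v$ into two vertices $v',v''$, so that $G$ is the infinite join $\cdots * H_\nu * H_{\nu+1}*\cdots$ of copies $(H_\nu,v'_\nu,v''_\nu)$ of $(H,v',v'')$, with $H_\nu$ joined to $H_{\nu+1}$ by identifying $v'_\nu$ with $v''_{\nu+1}$. Then, over $\mathbb F=\mathbb Q$, the Laplacian polynomial satisfies $\Delta_0(x)=\tau(H)(x-1)^2$ (up to units of $\mathbb Q[x^{\pm1}]$), where $\tau(H)$ is the number of spanning trees of $H$.
   Context: $\mathbb Z=\langle x\rangle$ acts on $G$ by deck transformations with quotient $\overline G$ with vertices $v_1,\dots,v_n$; choose lifts $v_{i,0}$ and set $v_{i,\nu}=x^\nu v_{i,0}$. The Laplacian matrix is $L(x)=D-A(x)$ over $\mathbb Q[x^{\pm1}]$, $D$ the diagonal matrix of degrees (loops counted twice), $A(x)_{ij}$ the sum of $x^\nu$ over edges of $G$ from $v_{i,0}$ to $v_{j,\nu}$; $\Delta_0=\det L(x)$, defined up to units. An annular cut set of $\overline G$ is a set of vertices whose removal (with incident edges) leaves a graph contained in a disk in $A$; $\kappa(\overline G)$ is the minimal cardinality of such a set. *)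

theory Defs
  imports "HOL-Computational_Algebra.Formal_Laurent_Series" "Jordan_Normal_Form.Determinant"
begin

definition multigraph :: "'v set \<Rightarrow> 'e set \<Rightarrow> ('e \<Rightarrow> 'v \<times> 'v) \<Rightarrow> bool" where
  "multigraph V E ends \<longleftrightarrow> finite V \<and> finite E \<and>
     (\<forall>e\<in>E. fst (ends e) \<in> V \<and> snd (ends e) \<in> V)"

definition adj_in :: "'e set \<Rightarrow> ('e \<Rightarrow> 'v \<times> 'v) \<Rightarrow> 'v \<Rightarrow> 'v \<Rightarrow> bool" where
  "adj_in T ends u w \<longleftrightarrow> (\<exists>e\<in>T. ends e = (u, w) \<or> ends e = (w, u))"

definition spanning_tree :: "'v set \<Rightarrow> 'e set \<Rightarrow> ('e \<Rightarrow> 'v \<times> 'v) \<Rightarrow> 'e set \<Rightarrow> bool" where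
  "spanning_tree V E ends T \<longleftrightarrow> T \<subseteq> E \<and> card T + 1 = card V \<and>
     (\<forall>u\<in>V. \<forall>w\<in>V. (adj_in T ends)\<^sup>*\<^sup>* u w)"

definition num_spanning_trees :: "'v set \<Rightarrow> 'e set \<Rightarrow> ('e \<Rightarrow> 'v \<times> 'v) \<Rightarrow> nat" where
  "num_spanning_trees V E ends = card {T. spanning_tree V E ends T}"

text \<open>A Z-periodic graph G is given by its finite quotient data: the vertex orbits Vq
  (vertex (i,\<nu>) of G stands for v_{i,\<nu>} = x^\<nu> v_{i,0}) and a finite set Eq of edge orbit
  representatives; the representative of e joins pends e = ((a,\<alpha>),(b,\<beta>)) in G, and its
  translate by x^k joins (a,\<alpha>+k) and (b,\<beta>+k).  The edges of G at v_{i,0} leading to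
  v_{j,\<nu>} are then exactly the translates of representatives with a = i, b = j,
  \<nu> = \<beta> - \<alpha> (translate by -\<alpha>) or b = i, a = j, \<nu> = \<alpha> - \<beta> (translate by -\<beta>);
  a loop of G is thereby counted twice, as is its contribution to the degree.\<close>

definition per_adj :: "'e set \<Rightarrow> ('e \<Rightarrow> ('v \<times> int) \<times> ('v \<times> int)) \<Rightarrow> 'v \<Rightarrow> 'v \<Rightarrow> rat fls" where
  "per_adj Eq pends i j =
     (\<Sum>e\<in>Eq. (case pends e of ((a,\<alpha>),(b,\<beta>)) \<Rightarrow>
        (if a = i \<and> b = j then fls_X_intpow (\<beta> - \<alpha>) else 0) +
        (if b = i \<and> a = j then fls_X_intpow (\<alpha> - \<beta>) else 0)))"

definition per_deg :: "'e set \<Rightarrow> ('e \<Rightarrow> ('v \<times> int) \<times> ('v \<times> int)) \<Rightarrow> 'v \<Rightarrow> rat fls" where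
  "per_deg Eq pends i =
     (\<Sum>e\<in>Eq. (case pends e of ((a,\<alpha>),(b,\<beta>)) \<Rightarrow>
        (if a = i then 1 else 0) + (if b = i then 1 else 0)))"

text \<open>Laplacian matrix L(x) = D - A(x), rows/columns indexed by the vertices of the quotient
  listed in increasing order, entries in Q[x^{\<plusminus>1}] \<subseteq> Q((x)).\<close>
definition per_laplacian ::
  "'v::linorder set \<Rightarrow> 'e set \<Rightarrow> ('e \<Rightarrow> ('v \<times> int) \<times> ('v \<times> int)) \<Rightarrow> rat fls mat" where
  "per_laplacian Vq Eq pends =
     (let vs = sorted_list_of_set Vq in
      mat (length vs) (length vs)
        (\<lambda>(r, s). (if r = s then per_deg Eq pends (vs ! r) else 0)
                  - per_adj Eq pends (vs ! r) (vs ! s)))"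

definition laplacian_poly ::
  "'v::linorder set \<Rightarrow> 'e set \<Rightarrow> ('e \<Rightarrow> ('v \<times> int) \<times> ('v \<times> int)) \<Rightarrow> rat fls" where
  "laplacian_poly Vq Eq pends = det (per_laplacian Vq Eq pends)"

text \<open>Quotient vertices: V - {v''} (v' represents the cut vertex v, lift v_0 = v'_0).
  Vertex w of the copy H_0 is (w,0) for w \<noteq> v'' and v''_0 = v'_{-1} = (v',-1).\<close>
definition join_lift :: "'v \<Rightarrow> 'v \<Rightarrow> 'v \<Rightarrow> 'v \<times> int" where
  "join_lift v' v'' w = (if w = v'' then (v', -1) else (w, 0))"

definition join_ends :: "('e \<Rightarrow> 'v \<times> 'v) \<Rightarrow> 'v \<Rightarrow> 'v \<Rightarrow> 'e \<Rightarrow> ('v \<times> int) \<times> ('v \<times> int)" where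
  "join_ends ends v' v'' e =
     (join_lift v' v'' (fst (ends e)), join_lift v' v'' (snd (ends e)))"

text \<open>Units of Q[x^{\<plusminus>1}] are c x^k with c \<noteq> 0.\<close>
definition assoc_laurent :: "rat fls \<Rightarrow> rat fls \<Rightarrow> bool" where
  "assoc_laurent p q \<longleftrightarrow> (\<exists>c::rat. \<exists>k::int. c \<noteq> 0 \<and> p = fls_const c * fls_X_intpow k * q)"

end

theory Submission
  imports Defs
begin


definition detS :: "'v set \<Rightarrow> ('v \<Rightarrow> 'v \<Rightarrow> 'a::comm_ring_1) \<Rightarrow> 'a" where
  "detS W f = (\<Sum>p\<in>{p. p permutes W}. of_int (sign p) * (\<Prod>i\<in>W. f i (p i)))"

lemma detS_cong:
  assumes "\<And>i j. i \<in> W \<Longrightarrow> j \<in> W \<Longrightarrow> f i j = g i j"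
  shows "detS W f = detS W g"
  unfolding detS_def
  by (intro sum.cong refl arg_cong2[where f="(*)"] prod.cong) (auto intro: assms permutes_in_image[THEN iffD2])

lemma detS_bij:
  fixes \<sigma> :: "'u \<Rightarrow> 'v"
  assumes bij: "bij_betw \<sigma> A B" and fin: "finite A"
  shows "detS A (\<lambda>i j. f (\<sigma> i) (\<sigma> j)) = detS B f"
proof -
  let ?\<phi> = "\<lambda>\<pi> x. if x \<in> B then \<sigma> (\<pi> (inv_into A \<sigma> x)) else x"
  have b: "bij_betw ?\<phi> {\<pi>. \<pi> permutes A} {\<pi>. \<pi> permutes B}"
    by (rule bij_betw_permutations[OF bij])
  have "detS B f = (\<Sum>\<pi>\<in>{\<pi>. \<pi> permutes A}. of_int (sign (?\<phi> \<pi>)) * (\<Prod>i\<in>B. f i (?\<phi> \<pi> i)))"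
    unfolding detS_def by (rule sum.reindex_bij_betw[OF b, symmetric])
  also have "\<dots> = (\<Sum>\<pi>\<in>{\<pi>. \<pi> permutes A}. of_int (sign \<pi>) * (\<Prod>i\<in>A. f (\<sigma> i) (\<sigma> (\<pi> i))))"
  proof (rule sum.cong[OF refl])
    fix \<pi> assume "\<pi> \<in> {\<pi>. \<pi> permutes A}"
    hence p: "\<pi> permutes A" by simp
    interpret permutes_bij_finite \<pi> A B \<sigma> "inv_into A \<sigma>" "?\<phi> \<pi>"
      by unfold_locales (use p bij fin in \<open>auto simp: bij_betw_inv_into_left\<close>)
    have s: "sign (?\<phi> \<pi>) = sign \<pi>" using sign_p' by simp
    have "(\<Prod>i\<in>B. f i (?\<phi> \<pi> i)) = (\<Prod>j\<in>A. f (\<sigma> j) (?\<phi> \<pi> (\<sigma> j)))"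
      by (rule prod.reindex_bij_betw[OF bij, symmetric])
    also have "\<dots> = (\<Prod>j\<in>A. f (\<sigma> j) (\<sigma> (\<pi> j)))"
      by (intro prod.cong refl) (use bij in \<open>auto simp: bij_betw_inv_into_left bij_betwE\<close>)
    finally show "of_int (sign (?\<phi> \<pi>)) * (\<Prod>i\<in>B. f i (?\<phi> \<pi> i)) = of_int (sign \<pi>) * (\<Prod>i\<in>A. f (\<sigma> i) (\<sigma> (\<pi> i)))"
      using s by simp
  qed
  finally show ?thesis unfolding detS_def by simp
qed

lemma detS_transpose:
  assumes fin: "finite W"
  shows "detS W (\<lambda>i j. f j i) = detS W f"
proof -
  have b: "bij_betw (\<lambda>p. Hilbert_Choice.inv p) {p. p permutes W} {p. p permutes W}"
    by (rule bij_betw_byWitness[where f'="\<lambda>p. Hilbert_Choice.inv p"]) (auto simp: permutes_inv permutes_inv_inv)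
  have "detS W f = (\<Sum>p\<in>{p. p permutes W}. of_int (sign (Hilbert_Choice.inv p)) * (\<Prod>i\<in>W. f i (Hilbert_Choice.inv p i)))"
    unfolding detS_def by (rule sum.reindex_bij_betw[OF b, symmetric])
  also have "\<dots> = (\<Sum>p\<in>{p. p permutes W}. of_int (sign p) * (\<Prod>i\<in>W. f (p i) i))"
  proof (rule sum.cong[OF refl])
    fix p assume "p \<in> {p. p permutes W}"
    hence p: "p permutes W" by simp
    have "sign (Hilbert_Choice.inv p) = sign p" using p fin by (simp add: sign_inverse permutes_imp_permutation)
    moreover have "(\<Prod>i\<in>W. f i (Hilbert_Choice.inv p i)) = (\<Prod>i\<in>W. f (p i) (Hilbert_Choice.inv p (p i)))"
      by (rule prod.reindex_bij_betw[OF permutes_imp_bij[OF p], symmetric])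
    moreover have "\<dots> = (\<Prod>i\<in>W. f (p i) i)" using p by (simp add: permutes_inverses)
    ultimately show "of_int (sign (Hilbert_Choice.inv p)) * (\<Prod>i\<in>W. f i (Hilbert_Choice.inv p i)) = of_int (sign p) * (\<Prod>i\<in>W. f (p i) i)"
      by simp
  qed
  finally show ?thesis unfolding detS_def by simp
qed

lemma detS_row_linear:
  fixes f :: "'v \<Rightarrow> 'v \<Rightarrow> 'a::comm_ring_1"
  assumes fin: "finite W" and i: "i \<in> W"
  shows "detS W (\<lambda>a b. if a = i then c * g b + h b else f a b)
       = c * detS W (\<lambda>a b. if a = i then g b else f a b) + detS W (\<lambda>a b. if a = i then h b else f a b)"
proof -
  have e: "(\<Prod>a\<in>W. (if a = i then k (p a) else f a (p a))) = k (p i) * (\<Prod>a\<in>W-{i}. f a (p a))" for k :: "'v \<Rightarrow> 'a" and p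
  proof -
    have "(\<Prod>a\<in>W. (if a = i then k (p a) else f a (p a))) = k (p i) * (\<Prod>a\<in>W-{i}. (if a = i then k (p a) else f a (p a)))"
      using fin i by (simp add: prod.remove)
    also have "(\<Prod>a\<in>W-{i}. (if a = i then k (p a) else f a (p a))) = (\<Prod>a\<in>W-{i}. f a (p a))"
      by (rule prod.cong) auto
    finally show ?thesis .
  qed
  show ?thesis
    unfolding detS_def sum_distrib_left sum.distrib[symmetric]
  proof (intro sum.cong refl)
    fix p
    show "of_int (sign p) * (\<Prod>a\<in>W. if a = i then c * g (p a) + h (p a) else f a (p a)) =
      c * (of_int (sign p) * (\<Prod>a\<in>W. if a = i then g (p a) else f a (p a))) +
      of_int (sign p) * (\<Prod>a\<in>W. if a = i then h (p a) else f a (p a))"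
      using e[of "\<lambda>y. c * g y + h y" p] e[of g p] e[of h p] by (simp add: algebra_simps)
  qed
qed


lemma detS_zero_row:
  fixes f :: "'v \<Rightarrow> 'v \<Rightarrow> 'a::comm_ring_1"
  assumes fin: "finite W" and i: "i \<in> W" and z: "\<And>j. j \<in> W \<Longrightarrow> f i j = 0"
  shows "detS W f = 0"
  unfolding detS_def
proof (intro sum.neutral ballI)
  fix p assume "p \<in> {p. p permutes W}"
  hence "p i \<in> W" using i by (simp add: permutes_in_image)
  hence "(\<Prod>a\<in>W. f a (p a)) = 0" using fin i z by (intro prod_zero) auto
  thus "of_int (sign p) * (\<Prod>a\<in>W. f a (p a)) = 0" by simp
qed

lemma detS_row_scale:
  fixes f :: "'v \<Rightarrow> 'v \<Rightarrow> 'a::comm_ring_1"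
  assumes fin: "finite W" and i: "i \<in> W"
  shows "detS W (\<lambda>a b. if a = i then c * g b else f a b) = c * detS W (\<lambda>a b. if a = i then g b else f a b)"
  using detS_row_linear[OF fin i, of c g "\<lambda>_. 0" f] detS_zero_row[OF fin i, of "\<lambda>a b. if a = i then 0 else f a b"]
  by (simp cong: if_cong)

lemma detS_row_add:
  fixes f :: "'v \<Rightarrow> 'v \<Rightarrow> 'a::comm_ring_1"
  assumes fin: "finite W" and i: "i \<in> W"
  shows "detS W (\<lambda>a b. if a = i then g b + h b else f a b)
       = detS W (\<lambda>a b. if a = i then g b else f a b) + detS W (\<lambda>a b. if a = i then h b else f a b)"
  using detS_row_linear[OF fin i, of 1 g h f] by (simp cong: if_cong)

lemma detS_row_sum:
  fixes f :: "'v \<Rightarrow> 'v \<Rightarrow> 'a::comm_ring_1"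
  assumes fin: "finite W" and i: "i \<in> W" and K: "finite K"
  shows "detS W (\<lambda>a b. if a = i then (\<Sum>k\<in>K. g k b) else f a b)
       = (\<Sum>k\<in>K. detS W (\<lambda>a b. if a = i then g k b else f a b))"
  using K
proof (induction K rule: finite_induct)
  case empty
  then show ?case using detS_zero_row[OF fin i, of "\<lambda>a b. if a = i then 0 else f a b"] by (simp cong: if_cong)
next
  case (insert k K)
  then show ?case using detS_row_add[OF fin i, of "g k" "\<lambda>b. \<Sum>k\<in>K. g k b" f] by (simp cong: if_cong)
qed

lemma detS_alternating:
  fixes f :: "'v \<Rightarrow> 'v \<Rightarrow> 'a::field_char_0"
  assumes fin: "finite W" and i: "i \<in> W" and k: "k \<in> W" and ik: "i \<noteq> k"
    and eq: "\<And>j. j \<in> W \<Longrightarrow> f i j = f k j"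
  shows "detS W f = 0"
proof -
  let ?t = "Transposition.transpose i k"
  have tW: "?t permutes W" using i k by (simp add: permutes_swap_id)
  have b: "bij_betw (\<lambda>p. p \<circ> ?t) {p. p permutes W} {p. p permutes W}"
    by (rule bij_betw_byWitness[where f'="\<lambda>p. p \<circ> ?t"]) (auto simp: o_assoc[symmetric] permutes_compose[OF tW])
  have "detS W f = (\<Sum>p\<in>{p. p permutes W}. of_int (sign (p \<circ> ?t)) * (\<Prod>a\<in>W. f a ((p \<circ> ?t) a)))"
    unfolding detS_def by (rule sum.reindex_bij_betw[OF b, symmetric])
  also have "\<dots> = - detS W f"
    unfolding detS_def sum_negf[symmetric]
  proof (rule sum.cong[OF refl])
    fix p assume "p \<in> {p. p permutes W}"
    hence p: "p permutes W" by simp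
    have sg: "sign (p \<circ> ?t) = - sign p"
      using p fin ik by (simp add: sign_compose permutes_imp_permutation permutation_swap_id sign_swap_id)
    have "(\<Prod>a\<in>W. f a ((p \<circ> ?t) a)) = (\<Prod>a\<in>W. f (?t a) ((p \<circ> ?t) (?t a)))"
      by (rule prod.reindex_bij_betw[OF permutes_imp_bij[OF tW], symmetric])
    also have "\<dots> = (\<Prod>a\<in>W. f a (p a))"
    proof (rule prod.cong[OF refl])
      fix a assume a: "a \<in> W"
      have pa: "p a \<in> W" using p a by (simp add: permutes_in_image)
      show "f (?t a) ((p \<circ> ?t) (?t a)) = f a (p a)"
        using eq[OF pa] by (auto simp: Transposition.transpose_def)
    qed
    finally show "of_int (sign (p \<circ> ?t)) * (\<Prod>a\<in>W. f a ((p \<circ> ?t) a)) = - (of_int (sign p) * (\<Prod>a\<in>W. f a (p a)))"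
      using sg by simp
  qed
  finally show ?thesis by simp
qed

lemma detS_add_all_rows:
  fixes f :: "'v \<Rightarrow> 'v \<Rightarrow> 'a::field_char_0"
  assumes fin: "finite W" and i: "i \<in> W"
  shows "detS W (\<lambda>a b. if a = i then (\<Sum>k\<in>W. f k b) else f a b) = detS W f"
proof -
  have "detS W (\<lambda>a b. if a = i then (\<Sum>k\<in>W. f k b) else f a b) = (\<Sum>k\<in>W. detS W (\<lambda>a b. if a = i then f k b else f a b))"
    by (rule detS_row_sum[OF fin i fin])
  also have "\<dots> = detS W (\<lambda>a b. if a = i then f i b else f a b)"
  proof (subst sum.remove[OF fin i], subst sum.neutral)
    show "\<forall>x\<in>W - {i}. detS W (\<lambda>a b. if a = i then f x b else f a b) = 0"
    proof
      fix x assume x: "x \<in> W - {i}"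
      show "detS W (\<lambda>a b. if a = i then f x b else f a b) = 0"
        by (rule detS_alternating[OF fin i, of x]) (use x in auto)
    qed
  qed simp
  also have "\<dots> = detS W f" by (rule detS_cong) auto
  finally show ?thesis .
qed

lemma detS_unit_row:
  fixes f :: "'v \<Rightarrow> 'v \<Rightarrow> 'a::comm_ring_1"
  assumes fin: "finite W" and b: "b \<in> W" and u: "\<And>j. j \<in> W \<Longrightarrow> f b j = (if j = b then 1 else 0)"
  shows "detS W f = detS (W - {b}) f"
proof -
  have "detS W f = (\<Sum>p\<in>{p. p permutes W \<and> p b = b}. of_int (sign p) * (\<Prod>i\<in>W. f i (p i)))"
    unfolding detS_def
  proof (rule sum.mono_neutral_right)
    show "finite {p. p permutes W}" using fin by (rule finite_permutations)
    show "\<forall>p\<in>{p. p permutes W} - {p. p permutes W \<and> p b = b}. of_int (sign p) * (\<Prod>i\<in>W. f i (p i)) = 0"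
    proof
      fix p assume "p \<in> {p. p permutes W} - {p. p permutes W \<and> p b = b}"
      hence p: "p permutes W" "p b \<noteq> b" by auto
      have "p b \<in> W" using p b by (simp add: permutes_in_image)
      hence "f b (p b) = 0" using u p by simp
      hence "(\<Prod>i\<in>W. f i (p i)) = 0" using fin b by (intro prod_zero) auto
      thus "of_int (sign p) * (\<Prod>i\<in>W. f i (p i)) = 0" by simp
    qed
  qed auto
  also have "{p. p permutes W \<and> p b = b} = {p. p permutes (W - {b})}"
  proof safe
    fix p assume "p permutes W" "p b = b" thus "p permutes W - {b}"
      unfolding permutes_def by (metis Diff_iff singletonD)
  next
    fix p assume "p permutes W - {b}" thus "p permutes W" using permutes_subset by blast
  next
    fix p assume "p permutes W - {b}" thus "p b = b" by (simp add: permutes_not_in)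
  qed
  also have "(\<Sum>p\<in>{p. p permutes (W - {b})}. of_int (sign p) * (\<Prod>i\<in>W. f i (p i))) = detS (W - {b}) f"
    unfolding detS_def
  proof (rule sum.cong[OF refl])
    fix p assume "p \<in> {p. p permutes (W - {b})}"
    hence p: "p permutes W - {b}" by simp
    hence pb: "p b = b" by (simp add: permutes_not_in)
    have "(\<Prod>i\<in>W. f i (p i)) = f b (p b) * (\<Prod>i\<in>W - {b}. f i (p i))" using fin b by (simp add: prod.remove)
    thus "of_int (sign p) * (\<Prod>i\<in>W. f i (p i)) = of_int (sign p) * (\<Prod>i\<in>W - {b}. f i (p i))"
      using pb u b by simp
  qed
  finally show ?thesis .
qed


lemma det_mat_list:
  fixes f :: "'v \<Rightarrow> 'v \<Rightarrow> 'a::comm_ring_1"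
  assumes d: "distinct vs"
  shows "det (mat (length vs) (length vs) (\<lambda>(r,s). f (vs!r) (vs!s))) = detS (set vs) f"
proof -
  let ?n = "length vs"
  have "det (mat ?n ?n (\<lambda>(r,s). f (vs!r) (vs!s))) = detS {0..<?n} (\<lambda>r s. f (vs!r) (vs!s))"
    unfolding det_def' [OF mat_carrier] detS_def
    by (intro sum.cong refl arg_cong2[where f="(*)"] prod.cong) (auto simp: permutes_in_image)
  also have "\<dots> = detS (set vs) f"
    by (rule detS_bij) (auto intro: bij_betw_nth[OF d])
  finally show ?thesis .
qed



lemma adj_in_sym: "adj_in T ends u w \<Longrightarrow> adj_in T ends w u"
  unfolding adj_in_def by blast

lemma adj_in_mono: "T \<subseteq> T' \<Longrightarrow> (adj_in T ends)\<^sup>*\<^sup>* u w \<Longrightarrow> (adj_in T' ends)\<^sup>*\<^sup>* u w"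
proof -
  assume T: "T \<subseteq> T'" and r: "(adj_in T ends)\<^sup>*\<^sup>* u w"
  have "adj_in T ends \<le> adj_in T' ends" using T unfolding adj_in_def by blast
  thus ?thesis using r by (rule rtranclp_mono[THEN predicate2D])
qed

lemma rtranclp_adj_sym: "(adj_in T ends)\<^sup>*\<^sup>* u w \<Longrightarrow> (adj_in T ends)\<^sup>*\<^sup>* w u"
  by (induction rule: rtranclp_induct) (auto intro: converse_rtranclp_into_rtranclp adj_in_sym)

lemma adj_map:
  assumes "m (fst (ends e)) = m (snd (ends e))"
    and "(adj_in T ends)\<^sup>*\<^sup>* x y"
  shows "(adj_in (T - {e}) (\<lambda>f. (m (fst (ends f)), m (snd (ends f)))))\<^sup>*\<^sup>* (m x) (m y)"
  using assms(2)
proof (induction rule: rtranclp_induct)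
  case base thus ?case by simp
next
  case (step y z)
  from step.hyps(2) obtain f where f: "f \<in> T" "ends f = (y, z) \<or> ends f = (z, y)"
    unfolding adj_in_def by blast
  show ?case
  proof (cases "f = e")
    case True
    with f assms(1) have "m y = m z" by auto
    with step.IH show ?thesis by simp
  next
    case False
    with f have "adj_in (T - {e}) (\<lambda>f. (m (fst (ends f)), m (snd (ends f)))) (m y) (m z)"
      unfolding adj_in_def by (intro bexI[of _ f]) auto
    with step.IH show ?thesis by (rule rtranclp.rtrancl_into_rtrancl)
  qed
qed

lemma adj_nonloop:
  assumes "(adj_in T ends)\<^sup>*\<^sup>* x y" "x \<noteq> y"
  shows "\<exists>f\<in>T. fst (ends f) \<noteq> snd (ends f)"
  using assms
proof (induction rule: rtranclp_induct)
  case base thus ?case by simp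
next
  case (step y z)
  from step.hyps(2) obtain f where f: "f \<in> T" "ends f = (y, z) \<or> ends f = (z, y)"
    unfolding adj_in_def by blast
  show ?case
  proof (cases "y = z")
    case True thus ?thesis using step by simp
  next
    case False thus ?thesis using f by (intro bexI[of _ f]) auto
  qed
qed

lemma adj_isolated:
  assumes "(adj_in T ends)\<^sup>*\<^sup>* r y"
    and "\<And>f. f \<in> T \<Longrightarrow> fst (ends f) = r \<or> snd (ends f) = r \<Longrightarrow> fst (ends f) = snd (ends f)"
  shows "y = r"
  using assms(1)
proof (induction rule: rtranclp_induct)
  case base thus ?case by simp
next
  case (step y z)
  from step.hyps(2) obtain f where f: "f \<in> T" "ends f = (y, z) \<or> ends f = (z, y)"
    unfolding adj_in_def by blast
  thus ?case using assms(2)[OF f(1)] step.IH by auto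
qed

definition nonloops :: "'e set \<Rightarrow> ('e \<Rightarrow> 'v \<times> 'v) \<Rightarrow> 'e set" where
  "nonloops T ends = {f\<in>T. fst (ends f) \<noteq> snd (ends f)}"

lemma connected_card:
  assumes "finite V" "finite T" "\<forall>f\<in>T. fst (ends f) \<in> V \<and> snd (ends f) \<in> V"
    "\<forall>u\<in>V. \<forall>w\<in>V. (adj_in T ends)\<^sup>*\<^sup>* u w"
  shows "card V \<le> card (nonloops T ends) + 1"
  using assms
proof (induction "card (nonloops T ends)" arbitrary: V ends rule: less_induct)
  case less
  show ?case
  proof (cases "card V \<le> 1")
    case True thus ?thesis by simp
  next
    case False
    have "\<exists>u w. u \<in> V \<and> w \<in> V \<and> u \<noteq> w"
      using False less.prems(1) by (auto simp: card_le_Suc0_iff_eq)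
    then obtain u w where uw: "u \<in> V" "w \<in> V" "u \<noteq> w" by blast
    obtain f where f: "f \<in> T" "fst (ends f) \<noteq> snd (ends f)"
      using adj_nonloop[OF less.prems(4)[rule_format, OF uw(1,2)] uw(3)] by blast
    define a where "a = fst (ends f)"
    define b where "b = snd (ends f)"
    have ab: "a \<in> V" "b \<in> V" "a \<noteq> b" using f less.prems(3) unfolding a_def b_def by auto
    define m where "m = (\<lambda>x. if x = b then a else x)"
    define ends' where "ends' = (\<lambda>g. (m (fst (ends g)), m (snd (ends g))))"
    have sub: "nonloops T ends' \<subseteq> nonloops T ends - {f}"
      unfolding nonloops_def ends'_def m_def using f unfolding a_def b_def by auto
    have lt: "card (nonloops T ends') < card (nonloops T ends)"
    proof -
      have "f \<in> nonloops T ends" using f by (simp add: nonloops_def)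
      moreover have "finite (nonloops T ends)" using less.prems(2) by (simp add: nonloops_def)
      ultimately show ?thesis using psubset_card_mono[of "nonloops T ends" "nonloops T ends'"] sub by blast
    qed
    have mV: "x \<in> V \<Longrightarrow> m x \<in> V - {b}" for x using ab by (auto simp: m_def)
    have IH: "card (V - {b}) \<le> card (nonloops T ends') + 1"
    proof (rule less.hyps[OF lt])
      show "finite (V - {b})" using less.prems(1) by simp
      show "finite T" by fact
      show "\<forall>g\<in>T. fst (ends' g) \<in> V - {b} \<and> snd (ends' g) \<in> V - {b}"
        using less.prems(3) mV by (auto simp: ends'_def)
      show "\<forall>x\<in>V - {b}. \<forall>y\<in>V - {b}. (adj_in T ends')\<^sup>*\<^sup>* x y"
      proof (intro ballI)
        fix x y assume xy: "x \<in> V - {b}" "y \<in> V - {b}"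
        have "m (fst (ends f)) = m (snd (ends f))" by (simp add: m_def a_def b_def)
        from adj_map[OF this less.prems(4)[rule_format, of x y]] xy
        have "(adj_in (T - {f}) ends')\<^sup>*\<^sup>* (m x) (m y)" by (auto simp: ends'_def)
        hence "(adj_in T ends')\<^sup>*\<^sup>* (m x) (m y)" by (rule adj_in_mono[rotated]) auto
        thus "(adj_in T ends')\<^sup>*\<^sup>* x y" using xy by (simp add: m_def)
      qed
    qed
    have "card (V - {b}) = card V - 1" using ab less.prems(1) by simp
    have "card (nonloops T ends') + 1 \<le> card (nonloops T ends)" using lt by simp
    thus ?thesis using IH \<open>card (V - {b}) = card V - 1\<close> False by linarith
  qed
qed


lemma finite_st: "finite E \<Longrightarrow> finite {T. spanning_tree V E ends T}"
  by (rule finite_subset[of _ "Pow E"]) (auto simp: spanning_tree_def)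

lemma deletion_contraction:
  assumes mg: "multigraph V E ends" and e: "e \<in> E" and ee: "ends e = (a,b) \<or> ends e = (b,a)"
    and ab: "a \<noteq> b"
  shows "num_spanning_trees V E ends = num_spanning_trees V (E - {e}) ends
     + num_spanning_trees (V - {b}) E (\<lambda>f. ((\<lambda>x. if x = b then a else x) (fst (ends f)),
                                             (\<lambda>x. if x = b then a else x) (snd (ends f))))"
proof -
  define m where "m = (\<lambda>x. if x = b then a else x)"
  define ends' where "ends' = (\<lambda>f. (m (fst (ends f)), m (snd (ends f))))"
  have finV: "finite V" and finE: "finite E" and inV: "\<And>f. f \<in> E \<Longrightarrow> fst (ends f) \<in> V \<and> snd (ends f) \<in> V"
    using mg by (auto simp: multigraph_def)
  have abV: "a \<in> V" "b \<in> V" using inV[OF e] ee by auto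
  have cardV: "card V \<ge> 2"
  proof -
    have "{a, b} \<subseteq> V" using abV by auto
    hence "card {a,b} \<le> card V" using finV by (rule card_mono[rotated])
    thus ?thesis using ab by simp
  qed
  have cardV': "card (V - {b}) = card V - 1" using abV finV by simp
  have me: "m (fst (ends e)) = m (snd (ends e))" using ee by (cases "ends e") (auto simp: m_def)
  let ?S = "{T. spanning_tree V E ends T}"
  let ?S1 = "{T. spanning_tree V (E - {e}) ends T}"
  let ?S2 = "{T. spanning_tree V E ends T \<and> e \<in> T}"
  let ?S3 = "{T. spanning_tree (V - {b}) E ends' T}"
  have split: "?S = ?S1 \<union> ?S2" unfolding spanning_tree_def by blast
  have disj: "?S1 \<inter> ?S2 = {}" unfolding spanning_tree_def by blast
  have fin1: "finite ?S1" using finE by (intro finite_st) simp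
  have fin2: "finite ?S2" using finite_st[OF finE, of V ends] by (rule finite_subset[rotated]) auto
  have A: "T - {e} \<in> ?S3" if T: "T \<in> ?S2" for T
  proof -
    have st: "T \<subseteq> E" "card T + 1 = card V" "\<forall>u\<in>V. \<forall>w\<in>V. (adj_in T ends)\<^sup>*\<^sup>* u w" "e \<in> T"
      using T by (auto simp: spanning_tree_def)
    have "finite T" using st(1) finE by (rule finite_subset)
    hence "card (T - {e}) = card T - 1" using st(4) by simp
    hence c: "card (T - {e}) + 1 = card (V - {b})" using st(2) cardV cardV' by simp
    have "(adj_in (T - {e}) ends')\<^sup>*\<^sup>* u w" if "u \<in> V - {b}" "w \<in> V - {b}" for u w
      using adj_map[OF me st(3)[rule_format, of u w]] that by (simp add: ends'_def m_def)
    thus ?thesis using st(1) c by (auto simp: spanning_tree_def)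
  qed
  have B: "e \<notin> T' \<and> insert e T' \<in> ?S2" if T': "T' \<in> ?S3" for T'
  proof -
    have st: "T' \<subseteq> E" "card T' + 1 = card (V - {b})" "\<forall>u\<in>V-{b}. \<forall>w\<in>V-{b}. (adj_in T' ends')\<^sup>*\<^sup>* u w"
      using T' by (auto simp: spanning_tree_def)
    have finT: "finite T'" using st(1) finE by (rule finite_subset)
    have mV: "x \<in> V \<Longrightarrow> m x \<in> V - {b}" for x using abV ab by (auto simp: m_def)
    have eT: "e \<notin> T'"
    proof
      assume eT: "e \<in> T'"
      have "card (V - {b}) \<le> card (nonloops T' ends') + 1"
      proof (rule connected_card)
        show "\<forall>f\<in>T'. fst (ends' f) \<in> V - {b} \<and> snd (ends' f) \<in> V - {b}"
        proof
          fix f assume "f \<in> T'"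
          hence "fst (ends f) \<in> V" "snd (ends f) \<in> V" using st(1) inV by auto
          thus "fst (ends' f) \<in> V - {b} \<and> snd (ends' f) \<in> V - {b}" using mV unfolding ends'_def by simp
        qed
      qed (use finV finT st in auto)
      moreover have "nonloops T' ends' \<subseteq> T' - {e}" using me by (auto simp: nonloops_def ends'_def)
      hence "card (nonloops T' ends') \<le> card (T' - {e})" using finT by (intro card_mono) auto
      moreover have "card (T' - {e}) = card T' - 1" using eT finT by simp
      moreover have "card T' \<ge> 1" using eT finT by (metis One_nat_def Suc_leI card_gt_0_iff empty_iff)
      ultimately show False using st(2) by linarith
    qed
    let ?R = "adj_in (insert e T') ends"
    have Rm: "?R\<^sup>*\<^sup>* z (m z)" for z
    proof (cases "z = b")
      case True
      have "?R b a" using ee unfolding adj_in_def by auto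
      thus ?thesis using True by (simp add: m_def)
    next
      case False thus ?thesis by (simp add: m_def)
    qed
    have step: "?R\<^sup>*\<^sup>* p q" if "adj_in T' ends' p q" for p q
    proof -
      from that obtain f where f: "f \<in> T'" "ends' f = (p,q) \<or> ends' f = (q,p)"
        unfolding adj_in_def by blast
      define c where "c = fst (ends f)"
      define d where "d = snd (ends f)"
      have Rcd: "?R c d" "?R d c" using f(1) unfolding adj_in_def c_def d_def by auto
      have pq: "(p = m c \<and> q = m d) \<or> (p = m d \<and> q = m c)" using f(2) by (auto simp: ends'_def c_def d_def)
      have 1: "?R\<^sup>*\<^sup>* (m z) z" for z using rtranclp_adj_sym[OF Rm[of z]] .
      show ?thesis using pq
      proof
        assume "p = m c \<and> q = m d"
        thus ?thesis using 1[of c] Rcd(1) Rm[of d]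
          by (meson rtranclp.rtrancl_into_rtrancl rtranclp_trans)
      next
        assume "p = m d \<and> q = m c"
        thus ?thesis using 1[of d] Rcd(2) Rm[of c]
          by (meson rtranclp.rtrancl_into_rtrancl rtranclp_trans)
      qed
    qed
    have lift: "?R\<^sup>*\<^sup>* p q" if "(adj_in T' ends')\<^sup>*\<^sup>* p q" for p q
      using that by (induction rule: rtranclp_induct) (auto intro: rtranclp_trans step)
    have conn: "?R\<^sup>*\<^sup>* u w" if "u \<in> V" "w \<in> V" for u w
    proof -
      have "?R\<^sup>*\<^sup>* (m u) (m w)" using lift st(3) mV that by blast
      thus ?thesis using Rm[of u] rtranclp_adj_sym[OF Rm[of w]] by (meson rtranclp_trans)
    qed
    have "card (insert e T') + 1 = card V" using eT finT st(2) cardV' cardV by simp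
    thus ?thesis using eT conn st(1) e by (auto simp: spanning_tree_def)
  qed
  have bij: "bij_betw (\<lambda>T. T - {e}) ?S2 ?S3"
  proof (rule bij_betw_byWitness[where f'="insert e"])
    show "\<forall>T\<in>?S2. insert e (T - {e}) = T" by auto
    show "\<forall>T\<in>?S3. insert e T - {e} = T" using B by auto
    show "(\<lambda>T. T - {e}) ` ?S2 \<subseteq> ?S3" using A by auto
    show "insert e ` ?S3 \<subseteq> ?S2" using B by auto
  qed
  have "num_spanning_trees V E ends = card ?S1 + card ?S2"
    unfolding num_spanning_trees_def split using card_Un_disjoint[OF fin1 fin2 disj] .
  also have "card ?S2 = card ?S3" using bij by (rule bij_betw_same_card)
  finally show ?thesis unfolding num_spanning_trees_def ends'_def m_def .
qed



definition lape :: "'v \<times> 'v \<Rightarrow> 'v \<Rightarrow> 'v \<Rightarrow> 'a::comm_ring_1" where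
  "lape ab u w = (if u = w then (if fst ab = u then 1 else 0) + (if snd ab = u then 1 else 0) else 0)
      - ((if ab = (u,w) then 1 else 0) + (if ab = (w,u) then 1 else 0))"

definition lapl :: "'e set \<Rightarrow> ('e \<Rightarrow> 'v \<times> 'v) \<Rightarrow> 'v \<Rightarrow> 'v \<Rightarrow> 'a::comm_ring_1" where
  "lapl E ends u w = (\<Sum>e\<in>E. lape (ends e) u w)"

lemma lape_sym: "lape ab u w = lape ab w u"
  unfolding lape_def by auto

lemma lapl_sym: "lapl E ends u w = lapl E ends w u"
  unfolding lapl_def by (simp add: lape_sym)

lemma lape_loop: "lape (c, c) u w = 0"
  unfolding lape_def by auto

lemma lape_colsum:
  assumes "finite V" "a \<in> V" "b \<in> V"
  shows "(\<Sum>u\<in>V. (lape (a,b) u w :: 'a::comm_ring_1)) = 0"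
proof -
  have "(\<Sum>u\<in>V. (lape (a,b) u w :: 'a)) =
     (\<Sum>u\<in>V. (if u = w then (if a = w then 1 else 0) + (if b = w then 1 else 0) else 0))
     - ((\<Sum>u\<in>V. (if u = a then (if b = w then 1 else 0) else 0)) + (\<Sum>u\<in>V. (if u = b then (if a = w then 1 else 0) else 0)))"
    unfolding lape_def sum_subtractf sum.distrib[symmetric]
    by (intro arg_cong2[where f="(-)"] sum.cong refl) auto
  also have "\<dots> = 0" using assms by (auto simp: sum.delta)
  finally show ?thesis .
qed

lemma lapl_colsum:
  assumes "multigraph V E ends"
  shows "(\<Sum>u\<in>V. (lapl E ends u w :: 'a::comm_ring_1)) = 0"
proof -
  have "(\<Sum>u\<in>V. (lapl E ends u w :: 'a)) = (\<Sum>e\<in>E. \<Sum>u\<in>V. lape (ends e) u w)"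
    unfolding lapl_def by (rule sum.swap)
  also have "\<dots> = 0"
  proof (rule sum.neutral, rule ballI)
    fix e assume "e \<in> E"
    hence "fst (ends e) \<in> V" "snd (ends e) \<in> V" "finite V" using assms by (auto simp: multigraph_def)
    thus "(\<Sum>u\<in>V. lape (ends e) u w :: 'a) = 0" using lape_colsum[of V "fst (ends e)" "snd (ends e)" w] by simp
  qed
  finally show ?thesis .
qed

lemma lape_at_r:
  assumes "ab = (r,b) \<or> ab = (b,r)" "u \<noteq> r" "w \<noteq> r"
  shows "lape ab u w = (if u = b \<and> w = b then 1 else 0)"
  using assms(1)
proof
  assume "ab = (r,b)" thus ?thesis using assms(2,3) unfolding lape_def by auto
next
  assume "ab = (b,r)" thus ?thesis using assms(2,3) unfolding lape_def by auto
qed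

lemma lape_contract:
  assumes "u \<noteq> r" "u \<noteq> b" "w \<noteq> r" "w \<noteq> b"
  shows "lape ((\<lambda>x. if x = b then r else x) (fst ab), (\<lambda>x. if x = b then r else x) (snd ab)) u w = lape ab u w"
proof -
  define m where "m = (\<lambda>x. if x = b then r else x)"
  have mu: "(m x = u) = (x = u)" "(m x = w) = (x = w)" for x using assms by (auto simp: m_def)
  obtain c d where ab: "ab = (c, d)" by (cases ab)
  have "lape (m c, m d) u w = lape (c, d) u w"
    unfolding lape_def by (simp add: mu)
  thus ?thesis by (simp only: ab m_def fst_conv snd_conv)
qed

lemma lape_isolated:
  assumes "fst ab = r \<or> snd ab = r \<longrightarrow> fst ab = snd ab" "w \<noteq> r"
  shows "lape ab r w = 0"
proof -
  have "ab \<noteq> (r,w)" "ab \<noteq> (w,r)" using assms by auto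
  thus ?thesis using assms(2) unfolding lape_def by simp
qed


lemma detS_empty [simp]: "detS {} f = 1"
  unfolding detS_def by simp

theorem matrix_tree:
  fixes ends :: "'e \<Rightarrow> 'v \<times> 'v"
  assumes "multigraph V E ends" "r \<in> V"
  shows "(detS (V - {r}) (lapl E ends) :: 'a::field_char_0) = of_nat (num_spanning_trees V E ends)"
  using assms
proof (induction "card (nonloops E ends)" arbitrary: V E ends r rule: less_induct)
  case less
  have finV: "finite V" and finE: "finite E" and inV: "\<And>f. f \<in> E \<Longrightarrow> fst (ends f) \<in> V \<and> snd (ends f) \<in> V"
    using less.prems(1) by (auto simp: multigraph_def)
  have finNL: "finite (nonloops E ends)" using finE by (simp add: nonloops_def)
  show ?case
  proof (cases "\<exists>e\<in>E. (fst (ends e) = r \<or> snd (ends e) = r) \<and> fst (ends e) \<noteq> snd (ends e)")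
    case True
    then obtain e b where e: "e \<in> E" "ends e = (r,b) \<or> ends e = (b,r)" "b \<noteq> r"
      by (metis prod.collapse)
    have bV: "b \<in> V" using inV[OF e(1)] e(2) by auto
    define W where "W = V - {r}"
    have finW: "finite W" and bW: "b \<in> W" using finV bV e(3) by (auto simp: W_def)
    let ?L = "lapl E ends :: 'v \<Rightarrow> 'v \<Rightarrow> 'a"
    let ?L' = "lapl (E - {e}) ends :: 'v \<Rightarrow> 'v \<Rightarrow> 'a"
    have hL: "?L u w = (if u = b then ?L' b w + (if w = b then 1 else 0) else ?L' u w)" if "u \<in> W" "w \<in> W" for u w
    proof -
      have "?L u w = lape (ends e) u w + ?L' u w" unfolding lapl_def using e(1) finE by (simp add: sum.remove)
      also have "lape (ends e) u w = (if u = b \<and> w = b then 1 else 0)"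
        by (rule lape_at_r[OF e(2)]) (use that in \<open>auto simp: W_def\<close>)
      finally show ?thesis by auto
    qed
    have "detS W ?L = detS W (\<lambda>u w. if u = b then ?L' b w + (if w = b then 1 else 0) else ?L' u w)"
      by (rule detS_cong) (rule hL)
    also have "\<dots> = detS W (\<lambda>u w. if u = b then ?L' b w else ?L' u w) + detS W (\<lambda>u w. if u = b then (if w = b then 1 else 0) else ?L' u w)"
      by (rule detS_row_add[OF finW bW])
    also have "detS W (\<lambda>u w. if u = b then ?L' b w else ?L' u w) = detS W ?L'"
      by (rule detS_cong) simp
    also have "detS W (\<lambda>u w. if u = b then (if w = b then 1 else 0) else ?L' u w) = detS (W - {b}) (\<lambda>u w. if u = b then (if w = b then 1 else 0) else ?L' u w)"
      by (rule detS_unit_row[OF finW bW]) simp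
    also have "\<dots> = detS (W - {b}) ?L'"
      by (rule detS_cong) simp
    finally have D: "detS W ?L = detS W ?L' + detS (W - {b}) ?L'" .
    have IH1: "detS W ?L' = of_nat (num_spanning_trees V (E - {e}) ends)"
      unfolding W_def
    proof (rule less.hyps)
      have "e \<in> nonloops E ends" using e by (auto simp: nonloops_def)
      moreover have "nonloops (E - {e}) ends = nonloops E ends - {e}" by (auto simp: nonloops_def)
      ultimately show "card (nonloops (E - {e}) ends) < card (nonloops E ends)"
        using finNL by (metis card_Diff1_less)
      show "multigraph V (E - {e}) ends" using less.prems(1) by (auto simp: multigraph_def)
      show "r \<in> V" by fact
    qed
    define m where "m = (\<lambda>x. if x = b then r else x)"
    define ends' where "ends' = (\<lambda>f. (m (fst (ends f)), m (snd (ends f))))"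
    have me: "ends' e = (r, r)" using e(2) by (cases "ends e") (auto simp: ends'_def m_def)
    have IH2: "detS ((V - {b}) - {r}) (lapl E ends' :: 'v \<Rightarrow> 'v \<Rightarrow> 'a) = of_nat (num_spanning_trees (V - {b}) E ends')"
    proof (rule less.hyps)
      have "nonloops E ends' \<subseteq> nonloops E ends - {e}"
        using me by (auto simp: nonloops_def ends'_def m_def split: if_splits)
      moreover have "e \<in> nonloops E ends" using e by (auto simp: nonloops_def)
      ultimately show "card (nonloops E ends') < card (nonloops E ends)"
      proof -
        have "card (nonloops E ends') \<le> card (nonloops E ends - {e})"
          using \<open>nonloops E ends' \<subseteq> nonloops E ends - {e}\<close> finNL by (intro card_mono) auto
        also have "\<dots> < card (nonloops E ends)"
          using \<open>e \<in> nonloops E ends\<close> finNL by (metis card_Diff1_less)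
        finally show ?thesis .
      qed
      show "multigraph (V - {b}) E ends'" using less.prems(1,2) e(3)
        by (auto simp: multigraph_def ends'_def m_def)
      show "r \<in> V - {b}" using less.prems(2) e(3) by simp
    qed
    have WV: "W - {b} = (V - {b}) - {r}" by (auto simp: W_def)
    have "detS (W - {b}) ?L' = detS ((V - {b}) - {r}) (lapl E ends' :: 'v \<Rightarrow> 'v \<Rightarrow> 'a)"
      unfolding WV[symmetric]
    proof (rule detS_cong)
      fix u w assume uw: "u \<in> W - {b}" "w \<in> W - {b}"
      have "(lapl E ends' u w :: 'a) = lape (ends' e) u w + (\<Sum>f\<in>E - {e}. lape (ends' f) u w)"
        unfolding lapl_def using e(1) finE by (simp add: sum.remove)
      also have "lape (ends' e) u w = (0::'a)" using me by (simp add: lape_loop)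
      also have "(\<Sum>f\<in>E - {e}. lape (ends' f) u w) = (\<Sum>f\<in>E - {e}. (lape (ends f) u w :: 'a))"
        using uw unfolding ends'_def m_def W_def by (intro sum.cong refl lape_contract) auto
      finally show "?L' u w = lapl E ends' u w" by (simp add: lapl_def)
    qed
    hence D2: "detS (W - {b}) ?L' = of_nat (num_spanning_trees (V - {b}) E ends')" using IH2 by simp
    have DC: "num_spanning_trees V E ends = num_spanning_trees V (E - {e}) ends + num_spanning_trees (V - {b}) E ends'"
      unfolding ends'_def m_def by (rule deletion_contraction[OF less.prems(1) e(1) e(2) e(3)[symmetric]])
    show ?thesis using D IH1 D2 DC by (simp add: W_def)
  next
    case False
    note iso = False
    show ?thesis
    proof (cases "V = {r}")
      case True
      have "{T. spanning_tree V E ends T} = {{}}"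
      proof -
        have A: "T = {}" if "spanning_tree V E ends T" for T
        proof -
          have "T \<subseteq> E" "card T = 0" using True that by (auto simp: spanning_tree_def)
          thus "T = {}" using finE by (meson card_0_eq finite_subset)
        qed
        have B: "spanning_tree V E ends {}" using True by (auto simp: spanning_tree_def)
        show ?thesis
        proof (rule Set.set_eqI)
          fix T
          show "T \<in> {T. spanning_tree V E ends T} \<longleftrightarrow> T \<in> {{}}"
          proof
            assume "T \<in> {T. spanning_tree V E ends T}"
            hence "T = {}" using A by simp
            thus "T \<in> {{}}" by simp
          next
            assume "T \<in> {{}}"
            hence "T = {}" by simp
            thus "T \<in> {T. spanning_tree V E ends T}" using B by simp
          qed
        qed
      qed
      thus ?thesis using True by (simp add: num_spanning_trees_def)
    next
      case False
      define W where "W = V - {r}"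
      obtain w0 where w0: "w0 \<in> W" using False less.prems(2) unfolding W_def by blast
      have finW: "finite W" using finV by (simp add: W_def)
      let ?L = "lapl E ends :: 'v \<Rightarrow> 'v \<Rightarrow> 'a"
      have Lr: "?L r y = 0" if "y \<noteq> r" for y
        unfolding lapl_def using iso that by (intro sum.neutral ballI lape_isolated) auto
      have "detS W ?L = detS W (\<lambda>a b. if a = w0 then (\<Sum>k\<in>W. ?L k b) else ?L a b)"
        by (rule detS_add_all_rows[OF finW w0, symmetric])
      also have "\<dots> = 0"
      proof (rule detS_zero_row[OF finW w0])
        fix j assume j: "j \<in> W"
        have "(\<Sum>k\<in>V. ?L k j) = ?L r j + (\<Sum>k\<in>W. ?L k j)"
          unfolding W_def using finV less.prems(2) by (simp add: sum.remove)
        moreover have "(\<Sum>k\<in>V. ?L k j) = 0" by (rule lapl_colsum[OF less.prems(1)])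
        moreover have "?L r j = 0" using j by (intro Lr) (simp add: W_def)
        ultimately have "(\<Sum>k\<in>W. ?L k j) = 0" by simp
        thus "(if w0 = w0 then \<Sum>k\<in>W. ?L k j else ?L w0 j) = 0" by simp
      qed
      finally have "detS W ?L = 0" .
      moreover have "{T. spanning_tree V E ends T} = {}"
      proof -
        have A: "False" if st: "spanning_tree V E ends T" for T
        proof -
        have "w0 \<in> V" "w0 \<noteq> r" using w0 by (auto simp: W_def)
        hence "(adj_in T ends)\<^sup>*\<^sup>* r w0" using st less.prems(2) by (auto simp: spanning_tree_def)
        moreover have "\<And>f. f \<in> T \<Longrightarrow> fst (ends f) = r \<or> snd (ends f) = r \<Longrightarrow> fst (ends f) = snd (ends f)"
          using iso st by (auto simp: spanning_tree_def)
        ultimately have "w0 = r" by (rule adj_isolated)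
        thus False using \<open>w0 \<noteq> r\<close> by simp
        qed
        show ?thesis using A by auto
      qed
      ultimately show ?thesis by (simp add: num_spanning_trees_def W_def)
    qed
  qed
qed



definition Xp :: "int \<Rightarrow> rat fls" where "Xp k = fls_X_intpow k"
lemma Xp0[simp]: "Xp 0 = 1" by (simp add: Xp_def)
lemma XX: "Xp 1 * Xp (-1) = 1" unfolding Xp_def using fls_X_intpow_times_fls_X_intpow[of 1 "-1", where 'a=rat] by simp

definition dl :: "'v \<Rightarrow> 'v \<Rightarrow> rat fls" where "dl u v = (if u = v then 1 else 0)"
lemma dl_same[simp]: "dl u u = 1" by (simp add: dl_def)
lemma dl_ne: "u \<noteq> v \<Longrightarrow> dl u v = 0" by (simp add: dl_def)

lemma lape_dl: "(lape (x,y) i j :: rat fls) = dl i j * (dl x i + dl y i) - (dl x i * dl y j + dl y i * dl x j)"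
  unfolding dl_def lape_def
  by (cases "i = j"; cases "x = i"; cases "y = j"; cases "y = i"; cases "x = j") simp_all

lemma edge_id:
  fixes x y i j v' v'' :: 'v
  assumes i: "i \<noteq> v''" and j: "j \<noteq> v''" and v: "v' \<noteq> v''"
  shows "dl i j * (dl (fst (join_lift v' v'' x)) i + dl (fst (join_lift v' v'' y)) i)
     - (dl (fst (join_lift v' v'' x)) i * dl (fst (join_lift v' v'' y)) j * Xp (snd (join_lift v' v'' y) - snd (join_lift v' v'' x))
      + dl (fst (join_lift v' v'' y)) i * dl (fst (join_lift v' v'' x)) j * Xp (snd (join_lift v' v'' x) - snd (join_lift v' v'' y)))
   = lape (x,y) i j + dl i v' * Xp 1 * lape (x,y) v'' j + dl j v' * Xp (-1) * lape (x,y) i v''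
     + dl j v' * dl i v' * lape (x,y) v'' v''"
proof -
  have d: "dl v'' i = 0" "dl i v'' = 0" "dl v'' j = 0" "dl j v'' = 0" "dl v' v'' = 0" "dl v'' v' = 0"
    using i j v by (auto simp: dl_ne)
  show ?thesis
  proof (cases "x = v''"; cases "y = v''")
    assume xy: "x = v''" "y = v''"
    show ?thesis using xy d by (cases "i = v'"; cases "j = v'") (simp_all add: lape_dl join_lift_def dl_ne algebra_simps)
  next
    assume xy: "x = v''" "y \<noteq> v''"
    have dy: "dl y v'' = 0" "dl v'' y = 0" using xy by (auto simp: dl_ne)
    show ?thesis using xy d dy by (cases "i = v'"; cases "j = v'") (simp_all add: lape_dl join_lift_def dl_ne algebra_simps)
  next
    assume xy: "x \<noteq> v''" "y = v''"
    have dx: "dl x v'' = 0" "dl v'' x = 0" using xy by (auto simp: dl_ne)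
    show ?thesis using xy d dx by (cases "i = v'"; cases "j = v'") (simp_all add: lape_dl join_lift_def dl_ne algebra_simps)
  next
    assume xy: "x \<noteq> v''" "y \<noteq> v''"
    have dx: "dl x v'' = 0" "dl v'' x = 0" "dl y v'' = 0" "dl v'' y = 0" using xy by (auto simp: dl_ne)
    show ?thesis using xy d dx by (cases "i = v'"; cases "j = v'") (simp_all add: lape_dl join_lift_def dl_ne algebra_simps)
  qed
qed



lemma if1: "(if a = i then 1 else 0) = dl a i" by (simp add: dl_def)
lemma if2: "(if a = i \<and> b = j then c else 0) = dl a i * dl b j * c"
  by (cases "a = i"; cases "b = j") (simp_all add: dl_def)

lemma per_deg_dl: "per_deg Eq pends i = (\<Sum>e\<in>Eq. dl (fst (fst (pends e))) i + dl (fst (snd (pends e))) i)"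
  unfolding per_deg_def by (simp only: case_prod_unfold if1)

lemma per_adj_dl: "per_adj Eq pends i j = (\<Sum>e\<in>Eq.
     dl (fst (fst (pends e))) i * dl (fst (snd (pends e))) j * Xp (snd (snd (pends e)) - snd (fst (pends e)))
   + dl (fst (snd (pends e))) i * dl (fst (fst (pends e))) j * Xp (snd (fst (pends e)) - snd (snd (pends e))))"
  unfolding per_adj_def by (simp only: case_prod_unfold if2 Xp_def)

lemma lp_detS:
  fixes W :: "'v::linorder set"
  assumes "finite W"
  shows "laplacian_poly W Eq pends = detS W (\<lambda>i j. (if i = j then per_deg Eq pends i else 0) - per_adj Eq pends i j)"
proof -
  define vs where "vs = sorted_list_of_set W"
  have d: "distinct vs" and s: "set vs = W" using assms by (auto simp: vs_def)
  have "per_laplacian W Eq pends = mat (length vs) (length vs)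
      (\<lambda>(r,s). (\<lambda>i j. (if i = j then per_deg Eq pends i else 0) - per_adj Eq pends i j) (vs!r) (vs!s))"
    unfolding per_laplacian_def Let_def vs_def[symmetric]
    by (rule eq_matI) (use d in \<open>auto simp: nth_eq_iff_index_eq\<close>)
  thus ?thesis unfolding laplacian_poly_def using det_mat_list[OF d] s by simp
qed


lemma M_eq_R:
  assumes mg: "multigraph V E ends" and i: "i \<noteq> v''" and j: "j \<noteq> v''" and v: "v' \<noteq> v''"
  shows "(if i = j then per_deg E (join_ends ends v' v'') i else 0) - per_adj E (join_ends ends v' v'') i j
     = lapl E ends i j + dl i v' * Xp 1 * lapl E ends v'' j + dl j v' * Xp (-1) * lapl E ends i v''
       + dl j v' * dl i v' * lapl E ends v'' v''"
proof -
  have "(if i = j then per_deg E (join_ends ends v' v'') i else 0) = dl i j * per_deg E (join_ends ends v' v'') i"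
    by (simp add: dl_def)
  hence "(if i = j then per_deg E (join_ends ends v' v'') i else 0) - per_adj E (join_ends ends v' v'') i j
     = (\<Sum>e\<in>E. dl i j * (dl (fst (join_lift v' v'' (fst (ends e)))) i + dl (fst (join_lift v' v'' (snd (ends e)))) i)
     - (dl (fst (join_lift v' v'' (fst (ends e)))) i * dl (fst (join_lift v' v'' (snd (ends e)))) j * Xp (snd (join_lift v' v'' (snd (ends e))) - snd (join_lift v' v'' (fst (ends e))))
      + dl (fst (join_lift v' v'' (snd (ends e)))) i * dl (fst (join_lift v' v'' (fst (ends e)))) j * Xp (snd (join_lift v' v'' (fst (ends e))) - snd (join_lift v' v'' (snd (ends e))))))"
    unfolding per_deg_dl per_adj_dl sum_distrib_left sum_subtractf by (simp add: join_ends_def)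
  also have "\<dots> = (\<Sum>e\<in>E. lape (fst (ends e), snd (ends e)) i j + dl i v' * Xp 1 * lape (fst (ends e), snd (ends e)) v'' j
      + dl j v' * Xp (-1) * lape (fst (ends e), snd (ends e)) i v''
      + dl j v' * dl i v' * lape (fst (ends e), snd (ends e)) v'' v'')"
    by (rule sum.cong[OF refl], rule edge_id[OF i j v])
  also have "\<dots> = lapl E ends i j + dl i v' * Xp 1 * lapl E ends v'' j + dl j v' * Xp (-1) * lapl E ends i v''
       + dl j v' * dl i v' * lapl E ends v'' v''"
    unfolding lapl_def sum.distrib sum_distrib_left by simp
  finally show ?thesis .
qed


lemma Xp1_nz: "Xp 1 \<noteq> 0" using XX by auto
lemma Xm: "Xp (-1) = inverse (Xp 1)" using XX by (metis inverse_unique)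

lemma det_R:
  fixes V :: "'v set" and ends :: "'e \<Rightarrow> 'v \<times> 'v"
  assumes mg: "multigraph V E ends" and v'V: "v' \<in> V" and v''V: "v'' \<in> V" and v: "v' \<noteq> v''"
  shows "detS (V - {v''}) (\<lambda>i j. lapl E ends i j + dl i v' * Xp 1 * lapl E ends v'' j + dl j v' * Xp (-1) * lapl E ends i v''
       + dl j v' * dl i v' * lapl E ends v'' v'')
     = (2 - Xp 1 - Xp (-1)) * of_nat (num_spanning_trees V E ends)"
proof -
  define K :: "'v \<Rightarrow> 'v \<Rightarrow> rat fls" where "K = lapl E ends"
  define W where "W = V - {v''}"
  define \<sigma> where "\<sigma> = Transposition.transpose v' v''"
  define \<tau> :: "rat fls" where "\<tau> = of_nat (num_spanning_trees V E ends)"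
  have finW: "finite W" using mg by (auto simp: W_def multigraph_def)
  have v'W: "v' \<in> W" using v'V v by (auto simp: W_def)
  have \<sigma>a: "\<sigma> a = (if a = v' then v'' else a)" if "a \<in> W" for a
    using that by (auto simp: \<sigma>_def W_def Transposition.transpose_def)
  have \<sigma>\<sigma>: "\<sigma> (\<sigma> x) = x" for x by (simp add: \<sigma>_def)
  have \<sigma>W: "bij_betw \<sigma> W (V - {v'})"
  proof (rule bij_betw_byWitness[where f'=\<sigma>])
    show "\<forall>a\<in>W. \<sigma> (\<sigma> a) = a" "\<forall>a\<in>V - {v'}. \<sigma> (\<sigma> a) = a" using \<sigma>\<sigma> by auto
    show "\<sigma> ` W \<subseteq> V - {v'}" using v''V v by (auto simp: \<sigma>_def W_def Transposition.transpose_def)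
    show "\<sigma> ` (V - {v'}) \<subseteq> W" using v'V v by (auto simp: \<sigma>_def W_def Transposition.transpose_def)
  qed
  have A1: "detS W K = \<tau>" unfolding K_def W_def \<tau>_def by (rule matrix_tree[OF mg v''V])
  have A4: "detS W (\<lambda>a b. K (\<sigma> a) (\<sigma> b)) = \<tau>"
    using detS_bij[OF \<sigma>W finW, of K] matrix_tree[OF mg v'V] unfolding K_def \<tau>_def by simp
  have A2: "detS W (\<lambda>a b. K (\<sigma> a) b) = - \<tau>"
  proof -
    have "detS W (\<lambda>a b. K (\<sigma> a) b) = detS W (\<lambda>a b. if a = v' then (\<Sum>k\<in>W. K (\<sigma> k) b) else K (\<sigma> a) b)"
      by (rule detS_add_all_rows[OF finW v'W, symmetric])
    also have "\<dots> = detS W (\<lambda>a b. if a = v' then (-1) * K v' b else K a b)"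
    proof (rule detS_cong)
      fix a b assume ab: "a \<in> W" "b \<in> W"
      have "(\<Sum>k\<in>W. K (\<sigma> k) b) = (\<Sum>u\<in>V - {v'}. K u b)"
        using sum.reindex_bij_betw[OF \<sigma>W, of "\<lambda>u. K u b"] .
      also have "\<dots> = - K v' b"
      proof -
        have "(\<Sum>u\<in>V. K u b) = K v' b + (\<Sum>u\<in>V - {v'}. K u b)"
          using mg v'V by (simp add: sum.remove multigraph_def)
        moreover have "(\<Sum>u\<in>V. K u b) = 0" unfolding K_def by (rule lapl_colsum[OF mg])
        ultimately show ?thesis by (simp add: eq_neg_iff_add_eq_0 add.commute)
      qed
      finally show "(if a = v' then (\<Sum>k\<in>W. K (\<sigma> k) b) else K (\<sigma> a) b) = (if a = v' then (-1) * K v' b else K a b)"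
        using \<sigma>a[OF ab(1)] by simp
    qed
    also have "\<dots> = (-1) * detS W (\<lambda>a b. if a = v' then K v' b else K a b)"
      by (rule detS_row_scale[OF finW v'W])
    also have "detS W (\<lambda>a b. if a = v' then K v' b else K a b) = detS W K"
      by (rule detS_cong) simp
    finally show ?thesis using A1 by simp
  qed
  have A3: "detS W (\<lambda>a b. K a (\<sigma> b)) = - \<tau>"
  proof -
    have "detS W (\<lambda>a b. K a (\<sigma> b)) = detS W (\<lambda>a b. K (\<sigma> b) a)"
      unfolding K_def by (rule detS_cong) (rule lapl_sym)
    also have "\<dots> = detS W (\<lambda>a b. K (\<sigma> a) b)"
      by (rule detS_transpose[OF finW])
    finally show ?thesis using A2 by simp
  qed
  define G where "G = (\<lambda>i j. K i j + dl i v' * Xp 1 * K v'' j)"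
  have S2: "detS W G = Xp 1 * (- \<tau>) + \<tau>"
  proof -
    have "detS W G = detS W (\<lambda>a b. if a = v' then Xp 1 * K v'' b + K v' b else K a b)"
      by (rule detS_cong) (auto simp: G_def dl_ne)
    also have "\<dots> = Xp 1 * detS W (\<lambda>a b. if a = v' then K v'' b else K a b) + detS W (\<lambda>a b. if a = v' then K v' b else K a b)"
      by (rule detS_row_linear[OF finW v'W])
    also have "detS W (\<lambda>a b. if a = v' then K v'' b else K a b) = detS W (\<lambda>a b. K (\<sigma> a) b)"
      by (rule detS_cong) (simp add: \<sigma>a)
    also have "detS W (\<lambda>a b. if a = v' then K v' b else K a b) = detS W K"
      by (rule detS_cong) simp
    finally show ?thesis using A1 A2 by simp
  qed
  have S3: "detS W (\<lambda>a b. G a (\<sigma> b)) = Xp 1 * \<tau> + (- \<tau>)"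
  proof -
    have "detS W (\<lambda>a b. G a (\<sigma> b)) = detS W (\<lambda>a b. if a = v' then Xp 1 * K v'' (\<sigma> b) + K v' (\<sigma> b) else K a (\<sigma> b))"
      by (rule detS_cong) (auto simp: G_def dl_ne)
    also have "\<dots> = Xp 1 * detS W (\<lambda>a b. if a = v' then K v'' (\<sigma> b) else K a (\<sigma> b)) + detS W (\<lambda>a b. if a = v' then K v' (\<sigma> b) else K a (\<sigma> b))"
      by (rule detS_row_linear[OF finW v'W])
    also have "detS W (\<lambda>a b. if a = v' then K v'' (\<sigma> b) else K a (\<sigma> b)) = detS W (\<lambda>a b. K (\<sigma> a) (\<sigma> b))"
      by (rule detS_cong) (simp add: \<sigma>a)
    also have "detS W (\<lambda>a b. if a = v' then K v' (\<sigma> b) else K a (\<sigma> b)) = detS W (\<lambda>a b. K a (\<sigma> b))"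
      by (rule detS_cong) simp
    finally show ?thesis using A3 A4 by simp
  qed
  have "detS W (\<lambda>i j. K i j + dl i v' * Xp 1 * K v'' j + dl j v' * Xp (-1) * K i v'' + dl j v' * dl i v' * K v'' v'')
      = detS W (\<lambda>a b. (\<lambda>i j. K i j + dl i v' * Xp 1 * K v'' j + dl j v' * Xp (-1) * K i v'' + dl j v' * dl i v' * K v'' v'') b a)"
    by (rule detS_transpose[OF finW, symmetric])
  also have "\<dots> = detS W (\<lambda>a b. if a = v' then Xp (-1) * G b v'' + G b v' else G b a)"
  proof (rule detS_cong)
    fix a b assume ab: "a \<in> W" "b \<in> W"
    show "K b a + dl b v' * Xp 1 * K v'' a + dl a v' * Xp (-1) * K b v'' + dl a v' * dl b v' * K v'' v''
       = (if a = v' then Xp (-1) * G b v'' + G b v' else G b a)"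
      using Xp1_nz by (cases "a = v'") (simp_all add: G_def dl_ne Xm field_simps)
  qed
  also have "\<dots> = Xp (-1) * detS W (\<lambda>a b. if a = v' then G b v'' else G b a) + detS W (\<lambda>a b. if a = v' then G b v' else G b a)"
    by (rule detS_row_linear[OF finW v'W])
  also have "detS W (\<lambda>a b. if a = v' then G b v'' else G b a) = detS W (\<lambda>a b. G b (\<sigma> a))"
    by (rule detS_cong) (simp add: \<sigma>a)
  also have "\<dots> = detS W (\<lambda>a b. G a (\<sigma> b))"
    by (rule detS_transpose[OF finW])
  also have "detS W (\<lambda>a b. if a = v' then G b v' else G b a) = detS W (\<lambda>a b. G b a)"
    by (rule detS_cong) simp
  also have "\<dots> = detS W G" by (rule detS_transpose[OF finW])
  finally have "detS W (\<lambda>i j. K i j + dl i v' * Xp 1 * K v'' j + dl j v' * Xp (-1) * K i v'' + dl j v' * dl i v' * K v'' v'')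
     = Xp (-1) * (Xp 1 * \<tau> + (- \<tau>)) + (Xp 1 * (- \<tau>) + \<tau>)" using S2 S3 by simp
  also have "\<dots> = (2 - Xp 1 - Xp (-1)) * \<tau>"
    using Xp1_nz by (simp add: Xm field_simps)
  finally show ?thesis unfolding K_def W_def \<tau>_def .
qed


theorem mainTheorem6:
  fixes V :: "'v::linorder set" and E :: "'e set" and ends :: "'e \<Rightarrow> 'v \<times> 'v"
    and v' v'' :: 'v
  assumes "multigraph V E ends"
    and "v' \<in> V" and "v'' \<in> V" and "v' \<noteq> v''"
  shows "assoc_laurent
           (laplacian_poly (V - {v''}) E (join_ends ends v' v''))
           (of_nat (num_spanning_trees V E ends) * (fls_X - 1)^2)"
proof -
  note mg = assms(1)
  have finW: "finite (V - {v''})" using mg by (auto simp: multigraph_def)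
  define \<tau> :: "rat fls" where "\<tau> = of_nat (num_spanning_trees V E ends)"
  have "laplacian_poly (V - {v''}) E (join_ends ends v' v'')
      = detS (V - {v''}) (\<lambda>i j. (if i = j then per_deg E (join_ends ends v' v'') i else 0) - per_adj E (join_ends ends v' v'') i j)"
    by (rule lp_detS[OF finW])
  also have "\<dots> = detS (V - {v''}) (\<lambda>i j. lapl E ends i j + dl i v' * Xp 1 * lapl E ends v'' j + dl j v' * Xp (-1) * lapl E ends i v''
       + dl j v' * dl i v' * lapl E ends v'' v'')"
    by (rule detS_cong) (rule M_eq_R[OF mg], use assms(4) in auto)
  also have "\<dots> = (2 - Xp 1 - Xp (-1)) * \<tau>"
    unfolding \<tau>_def by (rule det_R[OF assms])
  finally have L: "laplacian_poly (V - {v''}) E (join_ends ends v' v'') = (2 - Xp 1 - Xp (-1)) * \<tau>" .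
  have X1: "fls_X = Xp 1" by (simp add: Xp_def fls_X_conv_shift_1)
  have X2: "fls_X_intpow (-1) = Xp (-1)" by (simp add: Xp_def)
  have "(2 - Xp 1 - Xp (-1)) * \<tau> = fls_const (-1) * fls_X_intpow (-1) * (\<tau> * (fls_X - 1)^2)"
    unfolding X1 X2 using Xp1_nz by (simp add: Xm field_simps power2_eq_square)
  thus ?thesis unfolding assoc_laurent_def L \<tau>_def by (intro exI[of _ "-1"]) auto
qed


end
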